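(* Let $\mathfrak{q}$ be an $n\times n$ quantum parameter matrix over a field $k$ and $V$ a $k$-vector space with basis $v_1,\dots,v_n$. There exists a surjective group homomorphism $\pi:\mathrm{Aut}_{\mathrm{gr}}(S_{\mathfrak{q}}(V))\to\mathrm{Stab}(\mathfrak{q})$ with $\ker\pi=\prod_{B\in\mathcal{B}_{\mathfrak{q}}}\mathrm{GL}(V_B)$ and $\pi\circ\iota=\mathrm{Id}$.
   Context: An $n\times n$ quantum parameter matrix is a matrix $\mathfrak{q}=(q_{ij})$ over $k$ with $q_{ii}=1$ and $q_{ij}q_{ji}=1$ for all $i,j$. $S_{\mathfrak{q}}(V)$ is the $k$-algebra generated by $v_1,\dots,v_n$ with relations $v_jv_i=q_{ij}v_iv_j$, graded by $\deg v_i=1$; $\mathrm{Aut}_{\mathrm{gr}}(S_{\mathfrak{q}}(V))$ is the group of degree-preserving algebra automorphisms, viewed as a subgroup of $\mathrm{GL}(V)$ by restriction. $\mathcal{B}_{\mathfrak{q}}$ is the partition of $[n]$ with $i\sim j$ iff rows $i,j$ of $\mathfrak{q}$ are identical; its classes are the blocks. $V_B=\mathrm{span}\{v_i:i\in B\}$, and $\mathrm{GL}(V_B)$ is identified with the subgroup of $\mathrm{GL}(V)$ acting on $V_B$ and fixing $v_i$ for $i\notin B$. $\mathfrak{q}_{BC}=(q_{ij})_{i\in B,j\in C}$. With $r=|\mathcal{B}_{\mathfrak{q}}|$, $\mathfrak{S}_r$ permutes the blocks, and $\mathrm{Stab}(\mathfrak{q})=\{\sigma\in\mathfrak{S}_r:|\sigma(B)|=|B|\text{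 and }\mathfrak{q}_{BC}=\mathfrak{q}_{\sigma(B)\sigma(C)}\text{ for all blocks }B,C\}$. The map $\iota:\mathrm{Stab}(\mathfrak{q})\to\mathrm{Aut}_{\mathrm{gr}}(S_{\mathfrak{q}}(V))$ sends $\sigma$ to the unique invertible linear map on $V$ that permutes the basis vectors $v_i$, sends $V_B$ onto $V_{\sigma(B)}$ for each block $B$, and preserves the order $v_1<\dots<v_n$ within each block (this is an injective group homomorphism into $\mathrm{Aut}_{\mathrm{gr}}(S_{\mathfrak{q}}(V))$). *)

theory Defs
  imports "Jordan_Normal_Form.Matrix" "HOL-Algebra.Coset" "HOL-Algebra.Generated_Groups"
    "HOL-Combinatorics.Permutations"
begin

(* Indices are 0..<n (paper: 1..n). Matrices g in GL(V) act on V by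
   g v_b = \<Sum>a. g$$(a,b) v_a (columns = images of basis vectors). *)

definition qpm :: "nat \<Rightarrow> (nat \<Rightarrow> nat \<Rightarrow> 'k::field) \<Rightarrow> bool" where
  "qpm n q \<longleftrightarrow> (\<forall>i<n. q i i = 1) \<and> (\<forall>i<n. \<forall>j<n. q i j * q j i = 1)"

definition blocks :: "nat \<Rightarrow> (nat \<Rightarrow> nat \<Rightarrow> 'k) \<Rightarrow> nat set set" where
  "blocks n q = {{j. j < n \<and> (\<forall>l<n. q j l = q i l)} | i. i < n}"

(* V \<otimes> V encoded by coefficient functions t (a,b) of v_a \<otimes> v_b *)
definition rel_tensor :: "(nat \<Rightarrow> nat \<Rightarrow> 'k::field) \<Rightarrow> nat \<Rightarrow> nat \<Rightarrow> nat \<times> nat \<Rightarrow> 'k" where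
  "rel_tensor q i j = (\<lambda>(a,b). (if a = j \<and> b = i then 1 else 0) - q i j * (if a = i \<and> b = j then 1 else 0))"

(* R = span of the relations v_j v_i - q_ij v_i v_j inside V \<otimes> V *)
definition rel_space :: "nat \<Rightarrow> (nat \<Rightarrow> nat \<Rightarrow> 'k::field) \<Rightarrow> (nat \<times> nat \<Rightarrow> 'k) set" where
  "rel_space n q = {t. \<exists>c. \<forall>a<n. \<forall>b<n.
     t (a,b) = (\<Sum>i<n. \<Sum>j<n. c i j * rel_tensor q i j (a,b))}"

definition tensor_act :: "nat \<Rightarrow> 'k::field mat \<Rightarrow> (nat \<times> nat \<Rightarrow> 'k) \<Rightarrow> (nat \<times> nat \<Rightarrow> 'k)" where
  "tensor_act n g t = (\<lambda>(a,b). \<Sum>c<n. \<Sum>d<n. g $$ (a,c) * g $$ (b,d) * t (c,d))"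

definition GL :: "nat \<Rightarrow> 'k::field mat monoid" where
  "GL n = \<lparr>carrier = {A \<in> carrier_mat n n. invertible_mat A}, mult = (*), one = 1\<^sub>m n\<rparr>"

(* Aut_gr(S_q(V)) as a subgroup of GL(V): S_q(V) = T(V)/(R) is quadratic, so g \<in> GL(V)
   extends to a graded algebra automorphism iff (g \<otimes> g)(R) \<subseteq> R *)
definition AutGr :: "nat \<Rightarrow> (nat \<Rightarrow> nat \<Rightarrow> 'k::field) \<Rightarrow> 'k mat monoid" where
  "AutGr n q = \<lparr>carrier = {g \<in> carrier (GL n).
      \<forall>i<n. \<forall>j<n. tensor_act n g (rel_tensor q i j) \<in> rel_space n q},
    mult = (*), one = 1\<^sub>m n\<rparr>"

definition enum :: "nat set \<Rightarrow> nat \<Rightarrow> nat" where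
  "enum B a = sorted_list_of_set B ! a"

definition stab :: "nat \<Rightarrow> (nat \<Rightarrow> nat \<Rightarrow> 'k) \<Rightarrow> (nat set \<Rightarrow> nat set) set" where
  "stab n q = {\<sigma>. \<sigma> permutes blocks n q \<and> (\<forall>B\<in>blocks n q. card (\<sigma> B) = card B) \<and>
     (\<forall>B\<in>blocks n q. \<forall>C\<in>blocks n q. \<forall>a<card B. \<forall>b<card C.
        q (enum B a) (enum C b) = q (enum (\<sigma> B) a) (enum (\<sigma> C) b))}"

definition StabG :: "nat \<Rightarrow> (nat \<Rightarrow> nat \<Rightarrow> 'k) \<Rightarrow> (nat set \<Rightarrow> nat set) monoid" where
  "StabG n q = \<lparr>carrier = stab n q, mult = (\<circ>), one = id\<rparr>"

definition block_of :: "nat \<Rightarrow> (nat \<Rightarrow> nat \<Rightarrow> 'k) \<Rightarrow> nat \<Rightarrow> nat set" where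
  "block_of n q i = (THE B. B \<in> blocks n q \<and> i \<in> B)"

definition pos_in :: "nat set \<Rightarrow> nat \<Rightarrow> nat" where
  "pos_in B i = (THE a. a < card B \<and> enum B a = i)"

definition iota :: "nat \<Rightarrow> (nat \<Rightarrow> nat \<Rightarrow> 'k::field) \<Rightarrow> (nat set \<Rightarrow> nat set) \<Rightarrow> 'k mat" where
  "iota n q \<sigma> = mat n n (\<lambda>(a,b).
     if a = enum (\<sigma> (block_of n q b)) (pos_in (block_of n q b) b) then 1 else 0)"

definition GL_block :: "nat \<Rightarrow> nat set \<Rightarrow> 'k::field mat set" where
  "GL_block n B = {g \<in> carrier (GL n). \<forall>a<n. \<forall>b<n.
     (b \<notin> B \<longrightarrow> g $$ (a,b) = (if a = b then 1 else 0)) \<and>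
     (b \<in> B \<and> a \<notin> B \<longrightarrow> g $$ (a,b) = 0)}"

end

theory Submission imports Defs "Jordan_Normal_Form.Determinant" begin

definition rq :: "nat \<Rightarrow> (nat \<Rightarrow> nat \<Rightarrow> 'k) \<Rightarrow> nat \<Rightarrow> nat \<Rightarrow> bool" where
  "rq n q a b \<longleftrightarrow> (\<forall>l<n. q a l = q b l)"

lemma rq_refl[simp]: "rq n q a a" by (simp add: rq_def)
lemma rq_sym: "rq n q a b \<Longrightarrow> rq n q b a" by (simp add: rq_def)
lemma rq_trans: "rq n q a b \<Longrightarrow> rq n q b c \<Longrightarrow> rq n q a c" by (simp add: rq_def)

definition blk :: "nat \<Rightarrow> (nat \<Rightarrow> nat \<Rightarrow> 'k) \<Rightarrow> nat \<Rightarrow> nat set" where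
  "blk n q i = {j. j < n \<and> rq n q j i}"

lemma mem_blk: "j \<in> blk n q i \<longleftrightarrow> j < n \<and> rq n q j i" by (simp add: blk_def)

lemma blocks_eq: "blocks n q = blk n q ` {..<n}"
  unfolding blocks_def blk_def rq_def by auto

lemma blk_in: "i < n \<Longrightarrow> i \<in> blk n q i" by (simp add: mem_blk)

lemma blk_eq_iff: "blk n q i = blk n q j \<longleftrightarrow> rq n q i j" if "i < n" "j < n"
proof
  assume "blk n q i = blk n q j" then show "rq n q i j" using blk_in[OF that(1), of q] by (simp add: mem_blk)
next
  assume "rq n q i j" then show "blk n q i = blk n q j"
    by (auto simp: mem_blk rq_def)
qed

lemma blk_eqI: "rq n q i j \<Longrightarrow> blk n q i = blk n q j"
  by (auto simp: mem_blk rq_def)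

lemma blocks_mem_blk: assumes "B \<in> blocks n q" "i \<in> B" shows "B = blk n q i"
proof -
  obtain k where k: "k < n" "B = blk n q k" using assms(1) unfolding blocks_eq by blast
  then have "rq n q i k" using assms(2) by (simp add: mem_blk)
  then show ?thesis using k blk_eqI[of n q i k] by simp
qed

lemma blk_blocks: "i < n \<Longrightarrow> blk n q i \<in> blocks n q"
  unfolding blocks_eq by auto

lemma block_of_eq: "i < n \<Longrightarrow> block_of n q i = blk n q i"
proof (unfold block_of_def, rule the_equality)
  assume "i < n" then show "blk n q i \<in> blocks n q \<and> i \<in> blk n q i" using blk_blocks blk_in by blast
next
  fix B assume "B \<in> blocks n q \<and> i \<in> B" then show "B = blk n q i" using blocks_mem_blk by blast
qed

lemma blocks_sub: assumes "B \<in> blocks n q" shows "B \<subseteq> {..<n}"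
proof -
  obtain k where "B = blk n q k" using assms unfolding blocks_eq by blast
  then show ?thesis by (auto simp: blk_def)
qed

lemma blocks_finite: "B \<in> blocks n q \<Longrightarrow> finite B"
  using finite_subset[OF blocks_sub] by blast

lemma blocks_ne: assumes "B \<in> blocks n q" shows "\<exists>i. i < n \<and> B = blk n q i"
proof -
  from assms obtain i where "i \<in> {..<n}" "B = blk n q i" unfolding blocks_eq by (rule imageE)
  then show ?thesis by blast
qed

lemma finite_blocks: "finite (blocks n q)"
  unfolding blocks_eq by simp

lemma Union_blocks: "\<Union> (blocks n q) = {..<n}"
proof
  show "\<Union> (blocks n q) \<subseteq> {..<n}" using blocks_sub by blast
  show "{..<n} \<subseteq> \<Union> (blocks n q)"
  proof
    fix x assume "x \<in> {..<n}"
    then have "x \<in> blk n q x" "blk n q x \<in> blocks n q" using blk_in blk_blocks by auto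
    then show "x \<in> \<Union> (blocks n q)" by blast
  qed
qed

lemma blocks_disj: "B \<in> blocks n q \<Longrightarrow> C \<in> blocks n q \<Longrightarrow> x \<in> B \<Longrightarrow> x \<in> C \<Longrightarrow> B = C"
  using blocks_mem_blk[of B n q x] blocks_mem_blk[of C n q x] by simp

definition bclosed :: "nat \<Rightarrow> (nat \<Rightarrow> nat \<Rightarrow> 'k) \<Rightarrow> nat set \<Rightarrow> bool" where
  "bclosed n q S \<longleftrightarrow> (\<forall>x<n. \<forall>y<n. rq n q x y \<longrightarrow> (x \<in> S \<longleftrightarrow> y \<in> S))"

lemma bclosed_blk: "bclosed n q (blk n q i)"
  unfolding bclosed_def mem_blk by (meson rq_sym rq_trans)

lemma bclosed_blocks: "B \<in> blocks n q \<Longrightarrow> bclosed n q B"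
  using blocks_ne bclosed_blk by metis

lemma bclosed_Union: "(\<And>B. B \<in> F \<Longrightarrow> bclosed n q B) \<Longrightarrow> bclosed n q (\<Union>F)"
  unfolding bclosed_def by blast

lemma bclosed_empty: "bclosed n q {}" unfolding bclosed_def by simp

context
  fixes n :: nat and q :: "nat \<Rightarrow> nat \<Rightarrow> 'k::field"
  assumes qpm: "qpm n q"
begin

lemma q_diag: "i < n \<Longrightarrow> q i i = 1" using qpm by (simp add: qpm_def)
lemma q_inv: "i < n \<Longrightarrow> j < n \<Longrightarrow> q i j * q j i = 1" using qpm by (simp add: qpm_def)
lemma q_ne0: "i < n \<Longrightarrow> j < n \<Longrightarrow> q i j \<noteq> 0" using q_inv by fastforce

lemma q_row: "rq n q a a' \<Longrightarrow> b < n \<Longrightarrow> q a b = q a' b" by (simp add: rq_def)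

lemma q_col: assumes "a < n" "b < n" "b' < n" "rq n q b b'" shows "q a b = q a b'"
proof -
  have "q b a = q b' a" using assms by (simp add: rq_def)
  moreover have "q a b * q b a = 1" "q a b' * q b' a = 1" using q_inv assms by auto
  ultimately show ?thesis
    by (metis mult.commute mult_cancel_left q_ne0 assms)
qed

lemma q_same: "i < n \<Longrightarrow> j < n \<Longrightarrow> rq n q i j \<Longrightarrow> q i j = 1"
proof -
  assume a: "i < n" "j < n" "rq n q i j"
  have "q i j = q j j" using q_row[OF a(3) a(2)] .
  also have "\<dots> = 1" using q_diag a by simp
  finally show ?thesis .
qed

end

lemma GL_carrier: "g \<in> carrier (GL n) \<longleftrightarrow> g \<in> carrier_mat n n \<and> invertible_mat g"
  by (simp add: GL_def)

lemma inv_mat_ex: assumes "g \<in> carrier_mat n n" "invertible_mat g"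
  shows "\<exists>h. h \<in> carrier_mat n n \<and> g * h = 1\<^sub>m n \<and> h * g = 1\<^sub>m n \<and> invertible_mat h"
proof -
  from assms obtain h where h: "inverts_mat g h" "inverts_mat h g" unfolding invertible_mat_def by auto
  have "dim_row h = n" "dim_col h = n"
    using h assms unfolding inverts_mat_def
    by (metis carrier_matD index_mult_mat index_one_mat)+
  then have hc: "h \<in> carrier_mat n n" by auto
  have "invertible_mat h" using h hc unfolding invertible_mat_def by (auto simp: square_mat.simps)
  moreover have "g * h = 1\<^sub>m n" "h * g = 1\<^sub>m n" using h assms hc by (simp_all add: inverts_mat_def)
  ultimately show ?thesis using hc by blast
qed

lemma invertible_mult': assumes "g \<in> carrier_mat n n" "invertible_mat g" "h \<in> carrier_mat n n" "invertible_mat h"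
  shows "invertible_mat (g * h)"
proof -
  obtain g' where g': "g' \<in> carrier_mat n n" "g * g' = 1\<^sub>m n" "g' * g = 1\<^sub>m n" using inv_mat_ex assms by blast
  obtain h' where h': "h' \<in> carrier_mat n n" "h * h' = 1\<^sub>m n" "h' * h = 1\<^sub>m n" using inv_mat_ex assms by blast
  have gh: "g * h \<in> carrier_mat n n" using assms by simp
  have hg: "h' * g' \<in> carrier_mat n n" using g' h' by simp
  have e1: "h * (h' * g') = (h * h') * g'"
    by (rule assoc_mult_mat[symmetric, OF assms(3) h'(1) g'(1)])
  then have e1': "h * (h' * g') = g'" using h'(2) g'(1) by simp
  have 1: "(g * h) * (h' * g') = 1\<^sub>m n"
    using assoc_mult_mat[OF assms(1) assms(3) hg] e1' g'(2) by simp
  have e2: "g' * (g * h) = (g' * g) * h"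
    by (rule assoc_mult_mat[symmetric, OF g'(1) assms(1) assms(3)])
  then have e2': "g' * (g * h) = h" using g'(3) assms(3) by simp
  have 2: "(h' * g') * (g * h) = 1\<^sub>m n"
    using assoc_mult_mat[OF h'(1) g'(1) gh] e2' h'(3) by simp
  have "inverts_mat (g * h) (h' * g')" "inverts_mat (h' * g') (g * h)"
    using 1 2 assms hg h'(1) unfolding inverts_mat_def by simp_all
  moreover have "square_mat (g * h)" using assms by simp
  ultimately show ?thesis unfolding invertible_mat_def by blast
qed

lemma group_GL: "group (GL n :: 'k::field mat monoid)"
proof (rule groupI)
  fix x y :: "'k mat" assume "x \<in> carrier (GL n)" "y \<in> carrier (GL n)"
  then show "x \<otimes>\<^bsub>GL n\<^esub> y \<in> carrier (GL n)"
    using invertible_mult'[of x n y] mult_carrier_mat[of x n n y n] by (simp add: GL_def)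
next
  show "\<one>\<^bsub>GL n\<^esub> \<in> carrier (GL n)" unfolding GL_def invertible_mat_def inverts_mat_def
    by (auto intro!: exI[of _ "1\<^sub>m n"])
next
  fix x y z :: "'k mat" assume "x \<in> carrier (GL n)" "y \<in> carrier (GL n)" "z \<in> carrier (GL n)"
  then show "x \<otimes>\<^bsub>GL n\<^esub> y \<otimes>\<^bsub>GL n\<^esub> z = x \<otimes>\<^bsub>GL n\<^esub> (y \<otimes>\<^bsub>GL n\<^esub> z)"
    by (simp add: GL_def assoc_mult_mat[of x n n y n z n])
next
  fix x :: "'k mat" assume "x \<in> carrier (GL n)"
  then show "\<one>\<^bsub>GL n\<^esub> \<otimes>\<^bsub>GL n\<^esub> x = x" by (auto simp: GL_def)
next
  fix x :: "'k mat" assume "x \<in> carrier (GL n)"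
  then obtain h where "h \<in> carrier_mat n n" "h * x = 1\<^sub>m n" "invertible_mat h"
    using inv_mat_ex by (metis GL_carrier)
  then have "h \<in> carrier (GL n)" "h \<otimes>\<^bsub>GL n\<^esub> x = \<one>\<^bsub>GL n\<^esub>" by (simp_all add: GL_def)
  then show "\<exists>y\<in>carrier (GL n). y \<otimes>\<^bsub>GL n\<^esub> x = \<one>\<^bsub>GL n\<^esub>" by blast
qed

lemma mult_entry: assumes "A \<in> carrier_mat n m" "B \<in> carrier_mat m p" "i < n" "j < p"
  shows "(A * B) $$ (i, j) = (\<Sum>k<m. A $$ (i, k) * B $$ (k, j))"
  using assms by (simp add: scalar_prod_def lessThan_atLeast0)

lemma sum_delta2: assumes "a < (n::nat)" "b < n"
  shows "(\<Sum>i<n. \<Sum>j<n. (if i = b then (if j = a then f i j else 0) else 0)) = (f b a :: 'a::comm_monoid_add)"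
proof -
  have "(\<Sum>j<n. (if i = b then (if j = a then f i j else 0) else 0)) = (if i = b then f i a else 0)" for i
    using assms by (cases "i = b") auto
  then show ?thesis using assms by simp
qed

lemma sum_rel: assumes "a < n" "b < n"
  shows "(\<Sum>i<n. \<Sum>j<n. c i j * rel_tensor q i j (a,b)) = c b a - q a b * c a b"
proof -
  have "(\<Sum>i<n. \<Sum>j<n. c i j * rel_tensor q i j (a,b))
     = (\<Sum>i<n. \<Sum>j<n. (if i = b then (if j = a then c i j else 0) else 0) - (if i = a then (if j = b then q i j * c i j else 0) else 0))"
    by (intro sum.cong refl) (auto simp: rel_tensor_def algebra_simps)
  also have "\<dots> = (\<Sum>i<n. \<Sum>j<n. (if i = b then (if j = a then c i j else 0) else 0)) - (\<Sum>i<n. \<Sum>j<n. (if i = a then (if j = b then q i j * c i j else 0) else 0))"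
    by (simp only: sum_subtractf)
  also have "\<dots> = c b a - q a b * c a b"
    using sum_delta2[OF assms, of c] sum_delta2[OF assms(2,1), of "\<lambda>i j. q i j * c i j"] by simp
  finally show ?thesis .
qed

lemma tensor_rel: assumes "a < n" "b < n" "i < n" "j < n"
  shows "tensor_act n g (rel_tensor q i j) (a,b) = g$$(a,j) * g$$(b,i) - q i j * (g$$(a,i) * g$$(b,j))"
proof -
  have "tensor_act n g (rel_tensor q i j) (a,b)
     = (\<Sum>c<n. \<Sum>d<n. (if c = j then (if d = i then g$$(a,c) * g$$(b,d) else 0) else 0) - (if c = i then (if d = j then q i j * (g$$(a,c) * g$$(b,d)) else 0) else 0))"
    unfolding tensor_act_def prod.case by (intro sum.cong refl) (auto simp: rel_tensor_def algebra_simps)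
  also have "\<dots> = (\<Sum>c<n. \<Sum>d<n. (if c = j then (if d = i then g$$(a,c) * g$$(b,d) else 0) else 0)) - (\<Sum>c<n. \<Sum>d<n. (if c = i then (if d = j then q i j * (g$$(a,c) * g$$(b,d)) else 0) else 0))"
    by (simp only: sum_subtractf)
  also have "\<dots> = g$$(a,j) * g$$(b,i) - q i j * (g$$(a,i) * g$$(b,j))"
    using sum_delta2[OF assms(3,4), of "\<lambda>c d. g$$(a,c) * g$$(b,d)"]
      sum_delta2[OF assms(4,3), of "\<lambda>c d. q i j * (g$$(a,c) * g$$(b,d))"] by simp
  finally show ?thesis .
qed

context
  fixes n :: nat and q :: "nat \<Rightarrow> nat \<Rightarrow> 'k::field"
  assumes qpm: "qpm n q"
begin

lemma rel_space_iff:
  "t \<in> rel_space n q \<longleftrightarrow> (\<forall>a<n. t (a,a) = 0) \<and> (\<forall>a<n. \<forall>b<n. t (a,b) + q a b * t (b,a) = 0)"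
proof
  assume "t \<in> rel_space n q"
  then obtain c where c0: "\<forall>a<n. \<forall>b<n. t (a,b) = (\<Sum>i<n. \<Sum>j<n. c i j * rel_tensor q i j (a,b))"
    unfolding rel_space_def by blast
  have c: "t (a,b) = c b a - q a b * c a b" if "a < n" "b < n" for a b
    using c0 that sum_rel[OF that, of c q] by simp
  have "t (a,a) = 0" if "a < n" for a using c[OF that that] q_diag[OF qpm that] by simp
  moreover have "t (a,b) + q a b * t (b,a) = 0" if "a < n" "b < n" for a b
  proof -
    have "t (a,b) + q a b * t (b,a) = c b a - q a b * c a b + q a b * (c a b - q b a * c b a)"
      using c that by simp
    also have "\<dots> = c b a * (1 - q a b * q b a)" by (simp add: algebra_simps)
    also have "\<dots> = 0" using q_inv[OF qpm that] by simp
    finally show ?thesis .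
  qed
  ultimately show "(\<forall>a<n. t (a,a) = 0) \<and> (\<forall>a<n. \<forall>b<n. t (a,b) + q a b * t (b,a) = 0)" by blast
next
  assume H: "(\<forall>a<n. t (a,a) = 0) \<and> (\<forall>a<n. \<forall>b<n. t (a,b) + q a b * t (b,a) = 0)"
  define c where "c = (\<lambda>i j. if i < j then t (j,i) else 0)"
  have "t (a,b) = (\<Sum>i<n. \<Sum>j<n. c i j * rel_tensor q i j (a,b))" if "a < n" "b < n" for a b
  proof -
    have "(\<Sum>i<n. \<Sum>j<n. c i j * rel_tensor q i j (a,b)) = c b a - q a b * c a b"
      using sum_rel[OF that] .
    also have "\<dots> = t (a,b)"
    proof (cases a b rule: linorder_cases)
      case less
      then have "t (a,b) = - q a b * t (b,a)" using H that by (simp add: eq_neg_iff_add_eq_0)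
      then show ?thesis using less by (simp add: c_def)
    next
      case equal then show ?thesis using H that by (simp add: c_def)
    next
      case greater then show ?thesis by (simp add: c_def)
    qed
    finally show ?thesis by simp
  qed
  then show "t \<in> rel_space n q" unfolding rel_space_def by (intro CollectI exI[of _ c]) blast
qed

lemma AutGr_iff: "g \<in> carrier (AutGr n q) \<longleftrightarrow> g \<in> carrier (GL n) \<and>
   (\<forall>i<n. \<forall>j<n. (\<forall>a<n. g$$(a,j) * g$$(a,i) - q i j * (g$$(a,i) * g$$(a,j)) = 0) \<and>
      (\<forall>a<n. \<forall>b<n. g$$(a,j) * g$$(b,i) - q i j * (g$$(a,i) * g$$(b,j)) + q a b * (g$$(b,j) * g$$(a,i) - q i j * (g$$(b,i) * g$$(a,j))) = 0))"
proof -
  have "tensor_act n g (rel_tensor q i j) \<in> rel_space n q \<longleftrightarrow>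
    (\<forall>a<n. g$$(a,j) * g$$(a,i) - q i j * (g$$(a,i) * g$$(a,j)) = 0) \<and>
      (\<forall>a<n. \<forall>b<n. g$$(a,j) * g$$(b,i) - q i j * (g$$(a,i) * g$$(b,j)) + q a b * (g$$(b,j) * g$$(a,i) - q i j * (g$$(b,i) * g$$(a,j))) = 0)"
    if "i < n" "j < n" for i j
    unfolding rel_space_iff using tensor_rel[OF _ _ that, of _ _ g q] by simp
  then show ?thesis unfolding AutGr_def partial_object.simps mem_Collect_eq by meson
qed

end

definition good :: "nat \<Rightarrow> (nat \<Rightarrow> nat \<Rightarrow> 'k::field) \<Rightarrow> 'k mat \<Rightarrow> bool" where
  "good n q g \<longleftrightarrow> (\<forall>a<n. \<forall>b<n. \<forall>i<n. \<forall>j<n. g$$(a,i) \<noteq> 0 \<longrightarrow> g$$(b,j) \<noteq> 0 \<longrightarrow> q a b = q i j)"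

context
  fixes n :: nat and q :: "nat \<Rightarrow> nat \<Rightarrow> 'k::field"
  assumes qpm: "qpm n q"
begin

lemmas AutGr_iff' = AutGr_iff[OF qpm]

lemma good_imp_Aut: assumes "g \<in> carrier (GL n)" "good n q g" shows "g \<in> carrier (AutGr n q)"
proof -
  have A: "g$$(a,j) * g$$(a,i) - q i j * (g$$(a,i) * g$$(a,j)) = 0" if "i<n" "j<n" "a<n" for i j a
  proof (cases "g$$(a,i) = 0 \<or> g$$(a,j) = 0")
    case True then show ?thesis by auto
  next
    case False
    then have "q a a = q i j" using assms(2) that unfolding good_def by blast
    then have "q i j = 1" using q_diag[OF qpm that(3)] by simp
    then show ?thesis by (simp add: mult.commute)
  qed
  have B: "g$$(a,j) * g$$(b,i) - q i j * (g$$(a,i) * g$$(b,j)) + q a b * (g$$(b,j) * g$$(a,i) - q i j * (g$$(b,i) * g$$(a,j))) = 0"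
    if "i<n" "j<n" "a<n" "b<n" for i j a b
  proof -
    have e: "g$$(a,j) * g$$(b,i) - q i j * (g$$(a,i) * g$$(b,j)) + q a b * (g$$(b,j) * g$$(a,i) - q i j * (g$$(b,i) * g$$(a,j)))
       = g$$(a,j)*g$$(b,i) * (1 - q a b * q i j) + g$$(a,i)*g$$(b,j) * (q a b - q i j)"
      by (simp add: algebra_simps)
    have 1: "g$$(a,j)*g$$(b,i) * (1 - q a b * q i j) = 0"
    proof (cases "g$$(a,j) = 0 \<or> g$$(b,i) = 0")
      case True then show ?thesis by auto
    next
      case False
      then have "q a b = q j i" using assms(2) that unfolding good_def by blast
      then show ?thesis using q_inv[OF qpm that(2,1)] by (simp add: mult.commute)
    qed
    have 2: "g$$(a,i)*g$$(b,j) * (q a b - q i j) = 0"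
    proof (cases "g$$(a,i) = 0 \<or> g$$(b,j) = 0")
      case True then show ?thesis by auto
    next
      case False
      then have "q a b = q i j" using assms(2) that unfolding good_def by blast
      then show ?thesis by simp
    qed
    show ?thesis using e 1 2 by simp
  qed
  show ?thesis unfolding AutGr_iff'
  proof (intro conjI allI impI)
    show "g \<in> carrier (GL n)" by (rule assms(1))
  next
    fix i j a assume "i < n" "j < n" "a < n"
    then show "g$$(a,j) * g$$(a,i) - q i j * (g$$(a,i) * g$$(a,j)) = 0" by (rule A)
  next
    fix i j a b assume "i < n" "j < n" "a < n" "b < n"
    then show "g$$(a,j) * g$$(b,i) - q i j * (g$$(a,i) * g$$(b,j)) + q a b * (g$$(b,j) * g$$(a,i) - q i j * (g$$(b,i) * g$$(a,j))) = 0" by (rule B)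
  qed
qed

lemma Aut_imp_good: assumes "g \<in> carrier (AutGr n q)" shows "good n q g"
proof -
  have gl: "g \<in> carrier (GL n)" using AutGr_iff'[THEN iffD1, OF assms] by (rule conjunct1)
  have H: "\<forall>i<n. \<forall>j<n. (\<forall>a<n. g$$(a,j) * g$$(a,i) - q i j * (g$$(a,i) * g$$(a,j)) = 0) \<and>
      (\<forall>a<n. \<forall>b<n. g$$(a,j) * g$$(b,i) - q i j * (g$$(a,i) * g$$(b,j)) + q a b * (g$$(b,j) * g$$(a,i) - q i j * (g$$(b,i) * g$$(a,j))) = 0)"
    using AutGr_iff'[THEN iffD1, OF assms] by (rule conjunct2)
  have R: "q i j = 1" if "a<n" "i<n" "j<n" "g$$(a,i) \<noteq> 0" "g$$(a,j) \<noteq> 0" for a i j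
  proof -
    have "g$$(a,j) * g$$(a,i) - q i j * (g$$(a,i) * g$$(a,j)) = 0" using H that by blast
    then have "(g$$(a,i) * g$$(a,j)) * (1 - q i j) = 0" by (simp add: algebra_simps)
    then show ?thesis using that by simp
  qed
  have S: "g$$(a,j)*g$$(b,i) * (1 - q a b * q i j) + g$$(a,i)*g$$(b,j) * (q a b - q i j) = 0"
    if "a<n" "b<n" "i<n" "j<n" for a b i j
  proof -
    have "g$$(a,j) * g$$(b,i) - q i j * (g$$(a,i) * g$$(b,j)) + q a b * (g$$(b,j) * g$$(a,i) - q i j * (g$$(b,i) * g$$(a,j))) = 0"
      using H that by blast
    then show ?thesis by (simp add: algebra_simps)
  qed
  have gc: "g \<in> carrier_mat n n" "invertible_mat g" using gl GL_carrier by auto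
  obtain h where h: "h \<in> carrier_mat n n" "g * h = 1\<^sub>m n" using inv_mat_ex[OF gc] by blast
  have C: "q a b = 1" if "a<n" "b<n" "i<n" "g$$(a,i) \<noteq> 0" "g$$(b,i) \<noteq> 0" for a b i
  proof (rule ccontr)
    assume ne: "q a b \<noteq> 1"
    then have ab: "a \<noteq> b" using q_diag[OF qpm] that by auto
    have M: "g$$(a,i) * g$$(b,k) = g$$(a,k) * g$$(b,i)" if "k<n" for k
    proof (cases "g$$(a,k) = 0 \<and> g$$(b,k) = 0")
      case True thus ?thesis by simp
    next
      case False
      then have "q i k = 1" using R \<open>a<n\<close> \<open>b<n\<close> \<open>i<n\<close> \<open>k<n\<close> \<open>g$$(a,i) \<noteq> 0\<close> \<open>g$$(b,i) \<noteq> 0\<close> by blast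
      then have "g$$(a,k)*g$$(b,i) * (1 - q a b) + g$$(a,i)*g$$(b,k) * (q a b - 1) = 0"
        using S[of a b i k] \<open>a<n\<close> \<open>b<n\<close> \<open>i<n\<close> \<open>k<n\<close> by simp
      then have "(1 - q a b) * (g$$(a,k)*g$$(b,i) - g$$(a,i)*g$$(b,k)) = 0" by (simp add: algebra_simps)
      then show ?thesis using ne by simp
    qed
    have "1 = (g * h) $$ (b,b)" using h that by simp
    also have "\<dots> = (\<Sum>k<n. g$$(b,k) * h$$(k,b))" using mult_entry[OF gc(1) h(1)] that by simp
    finally have e1: "(\<Sum>k<n. g$$(b,k) * h$$(k,b)) = 1" by simp
    have "(g * h) $$ (a,b) = 0" using h that ab by simp
    then have e2: "(\<Sum>k<n. g$$(a,k) * h$$(k,b)) = 0" using mult_entry[OF gc(1) h(1)] that by simp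
    have "g$$(a,i) = g$$(a,i) * (\<Sum>k<n. g$$(b,k) * h$$(k,b))" using e1 by simp
    also have "\<dots> = (\<Sum>k<n. (g$$(a,i) * g$$(b,k)) * h$$(k,b))" by (simp add: sum_distrib_left mult.assoc)
    also have "\<dots> = (\<Sum>k<n. (g$$(a,k) * g$$(b,i)) * h$$(k,b))" using M by (intro sum.cong) auto
    also have "\<dots> = g$$(b,i) * (\<Sum>k<n. g$$(a,k) * h$$(k,b))" by (simp add: sum_distrib_left algebra_simps)
    also have "\<dots> = 0" using e2 by simp
    finally show False using that(4) by simp
  qed
  show ?thesis unfolding good_def
  proof (intro allI impI)
    fix a b i j assume a: "a < n" "b < n" "i < n" "j < n" "g$$(a,i) \<noteq> 0" "g$$(b,j) \<noteq> 0"
    show "q a b = q i j"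
    proof (cases "g$$(a,j) = 0 \<or> g$$(b,i) = 0")
      case True
      then have "g$$(a,i)*g$$(b,j) * (q a b - q i j) = 0" using S[of a b i j] a by auto
      then show ?thesis using a by simp
    next
      case False
      then have "q i j = 1" using R[of a i j] a by blast
      moreover have "q a b = 1" using C[of a b i] a False by blast
      ultimately show ?thesis by simp
    qed
  qed
qed

lemma Aut_iff_good: "g \<in> carrier (AutGr n q) \<longleftrightarrow> g \<in> carrier (GL n) \<and> good n q g"
proof
  assume g: "g \<in> carrier (AutGr n q)"
  show "g \<in> carrier (GL n) \<and> good n q g"
    using conjunct1[OF AutGr_iff'[THEN iffD1, OF g]] Aut_imp_good[OF g] by (rule conjI)
next
  assume g: "g \<in> carrier (GL n) \<and> good n q g"
  show "g \<in> carrier (AutGr n q)" using good_imp_Aut[OF conjunct1[OF g] conjunct2[OF g]] .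
qed

end

lemma matching: assumes "g \<in> carrier_mat n n" "invertible_mat (g :: 'k::field mat)"
  shows "\<exists>p. p permutes {..<n} \<and> (\<forall>a<n. g$$(a, p a) \<noteq> 0)"
proof -
  obtain h where h: "h \<in> carrier_mat n n" "g * h = 1\<^sub>m n" using inv_mat_ex[OF assms] by blast
  have "det g * det h = 1" using det_mult[OF assms(1) h(1)] h(2) by simp
  then have "det g \<noteq> 0" by auto
  then have "(\<Sum> p \<in> {p. p permutes {0 ..< n}}. signof p * (\<Prod> i = 0 ..< n. g $$ (i, p i))) \<noteq> 0"
    using assms(1) unfolding det_def by simp
  then obtain p where p: "p \<in> {p. p permutes {0 ..< n}}" "signof p * (\<Prod> i = 0 ..< n. g $$ (i, p i)) \<noteq> 0"
    by (meson sum.not_neutral_contains_not_neutral)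
  then have "(\<Prod> i = 0 ..< n. g $$ (i, p i)) \<noteq> 0" by auto
  then have "\<forall>a<n. g$$(a, p a) \<noteq> 0" by (simp add: prod_zero_iff)
  moreover have "p permutes {..<n}" using p(1) by (simp add: lessThan_atLeast0)
  ultimately show ?thesis by blast
qed

lemma enum_in: assumes "finite B" "x < card B" shows "enum B x \<in> B"
  using assms unfolding enum_def
  by (metis length_sorted_list_of_set nth_mem set_sorted_list_of_set)

lemma enum_inj: assumes "finite B" "x < card B" "y < card B" "enum B x = enum B y" shows "x = y"
  using assms unfolding enum_def
  by (metis distinct_sorted_list_of_set length_sorted_list_of_set nth_eq_iff_index_eq)

lemma pos_in: assumes "finite B" "b \<in> B" shows "pos_in B b < card B \<and> enum B (pos_in B b) = b"
proof -
  have "b \<in> set (sorted_list_of_set B)" using assms by simp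
  then obtain k where k: "k < card B" "enum B k = b"
    unfolding enum_def using assms(1) by (metis in_set_conv_nth length_sorted_list_of_set)
  have "pos_in B b = k" unfolding pos_in_def
  proof (rule the_equality)
    show "k < card B \<and> enum B k = b" using k by simp
  next
    fix a assume "a < card B \<and> enum B a = b" then show "a = k" using enum_inj[OF assms(1)] k by metis
  qed
  then show ?thesis using k by simp
qed

definition piq :: "nat \<Rightarrow> (nat \<Rightarrow> nat \<Rightarrow> 'k) \<Rightarrow> 'k::field mat \<Rightarrow> nat set \<Rightarrow> nat set" where
  "piq n q g = (\<lambda>B. if B \<in> blocks n q then blk n q (SOME a. a < n \<and> (\<exists>b\<in>B. g$$(a,b) \<noteq> 0)) else B)"

lemma piq_char: assumes "B \<in> blocks n q" "a0 < n" "b0 \<in> B" "g$$(a0,b0) \<noteq> 0"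
  shows "\<exists>a b. a < n \<and> b \<in> B \<and> g$$(a,b) \<noteq> 0 \<and> piq n q g B = blk n q a"
proof -
  let ?P = "\<lambda>a. a < n \<and> (\<exists>b\<in>B. g$$(a,b) \<noteq> 0)"
  have "?P a0" using assms by blast
  then have "?P (SOME a. ?P a)" by (rule someI)
  then show ?thesis unfolding piq_def using assms(1) by auto
qed

lemma piq_out: "B \<notin> blocks n q \<Longrightarrow> piq n q g B = B"
  unfolding piq_def by simp

lemma GL_row_col: assumes "g \<in> carrier (GL n)"
  shows "\<exists>p. p permutes {..<n} \<and> (\<forall>a<n. g$$(a, p a) \<noteq> 0)"
  using matching assms GL_carrier by blast

lemma GL_col: assumes "g \<in> carrier (GL n)" "b < n" shows "\<exists>a<n. g$$(a,b) \<noteq> 0"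
proof -
  obtain p where p: "p permutes {..<n}" "\<forall>a<n. g$$(a, p a) \<noteq> 0" using GL_row_col[OF assms(1)] by blast
  have "inv_into UNIV p b < n" using permutes_in_image[OF permutes_inv[OF p(1)]] assms(2) by simp
  moreover have "p (inv_into UNIV p b) = b" using permutes_inverses[OF p(1)] by simp
  ultimately show ?thesis using p(2) by metis
qed

lemma GL_row: assumes "g \<in> carrier (GL n)" "a < n" shows "\<exists>b<n. g$$(a,b) \<noteq> 0"
proof -
  obtain p where p: "p permutes {..<n}" "\<forall>a<n. g$$(a, p a) \<noteq> 0" using GL_row_col[OF assms(1)] by blast
  have "p a < n" using permutes_in_image[OF p(1)] assms(2) by simp
  then show ?thesis using p(2) assms(2) by blast
qed

context
  fixes n :: nat and q :: "nat \<Rightarrow> nat \<Rightarrow> 'k::field" and g :: "'k mat"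
  assumes qpm: "qpm n q" and gGL: "g \<in> carrier (GL n)" and gg: "good n q g"
begin

lemma good_q: "a < n \<Longrightarrow> b < n \<Longrightarrow> i < n \<Longrightarrow> j < n \<Longrightarrow> g$$(a,i) \<noteq> 0 \<Longrightarrow> g$$(b,j) \<noteq> 0 \<Longrightarrow> q a b = q i j"
  using gg unfolding good_def by blast

lemma good_rq1: assumes "a < n" "i < n" "a' < n" "i' < n" "g$$(a,i) \<noteq> 0" "g$$(a',i') \<noteq> 0" "rq n q i i'"
  shows "rq n q a a'"
  unfolding rq_def
proof (intro allI impI)
  fix l assume l: "l < n"
  obtain j where j: "j < n" "g$$(l,j) \<noteq> 0" using GL_row[OF gGL l] by blast
  have "q a l = q i j" using good_q assms j l by blast
  also have "\<dots> = q i' j" using assms(7) j(1) by (simp add: rq_def)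
  also have "\<dots> = q a' l" using good_q assms j l by metis
  finally show "q a l = q a' l" .
qed

lemma good_rq2: assumes "a < n" "i < n" "a' < n" "i' < n" "g$$(a,i) \<noteq> 0" "g$$(a',i') \<noteq> 0" "rq n q a a'"
  shows "rq n q i i'"
  unfolding rq_def
proof (intro allI impI)
  fix l assume l: "l < n"
  obtain m where m: "m < n" "g$$(m,l) \<noteq> 0" using GL_col[OF gGL l] by blast
  have "q i l = q a m" using good_q assms m l by metis
  also have "\<dots> = q a' m" using assms(7) m(1) by (simp add: rq_def)
  also have "\<dots> = q i' l" using good_q assms m l by blast
  finally show "q i l = q i' l" .
qed

lemma KL: assumes "a < n" "i < n" "g$$(a,i) \<noteq> 0" shows "piq n q g (blk n q i) = blk n q a"
proof -
  obtain a' b where ab: "a' < n" "b \<in> blk n q i" "g$$(a',b) \<noteq> 0" "piq n q g (blk n q i) = blk n q a'"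
    using piq_char[OF blk_blocks[OF assms(2)] assms(1) blk_in[OF assms(2)] assms(3)] by blast
  have "b < n" "rq n q b i" using ab(2) by (simp_all add: mem_blk)
  then have "rq n q a' a" using good_rq1[OF ab(1) _ assms(1) assms(2) ab(3) assms(3)] by blast
  then show ?thesis using ab(4) blk_eqI by metis
qed

lemma KL': assumes "B \<in> blocks n q" shows "\<exists>i a. i < n \<and> a < n \<and> B = blk n q i \<and> g$$(a,i) \<noteq> 0 \<and> piq n q g B = blk n q a"
proof -
  obtain i where i: "i < n" "B = blk n q i" using blocks_ne[OF assms] by blast
  obtain a where a: "a < n" "g$$(a,i) \<noteq> 0" using GL_col[OF gGL i(1)] by blast
  show ?thesis using KL[OF a(1) i(1) a(2)] i a by blast
qed

lemma piq_blocks: "B \<in> blocks n q \<Longrightarrow> piq n q g B \<in> blocks n q"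
  using KL' blk_blocks by metis

lemma piq_bij: "bij_betw (piq n q g) (blocks n q) (blocks n q)"
proof (rule bij_betw_imageI)
  show "inj_on (piq n q g) (blocks n q)"
  proof (rule inj_onI)
    fix B C assume B: "B \<in> blocks n q" and C: "C \<in> blocks n q" and e: "piq n q g B = piq n q g C"
    obtain i a where ia: "i < n" "a < n" "B = blk n q i" "g$$(a,i) \<noteq> 0" "piq n q g B = blk n q a" using KL'[OF B] by blast
    obtain i' a' where ia': "i' < n" "a' < n" "C = blk n q i'" "g$$(a',i') \<noteq> 0" "piq n q g C = blk n q a'" using KL'[OF C] by blast
    have "rq n q a a'" using e ia ia' blk_eq_iff by metis
    then have "rq n q i i'" using good_rq2[OF ia(2) ia(1) ia'(2) ia'(1) ia(4) ia'(4)] by blast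
    then show "B = C" using ia ia' blk_eqI by metis
  qed
next
  show "piq n q g ` blocks n q = blocks n q"
  proof
    show "piq n q g ` blocks n q \<subseteq> blocks n q" using piq_blocks by blast
  next
    show "blocks n q \<subseteq> piq n q g ` blocks n q"
    proof
      fix B assume "B \<in> blocks n q"
      then obtain a where a: "a < n" "B = blk n q a" using blocks_ne by blast
      obtain i where i: "i < n" "g$$(a,i) \<noteq> 0" using GL_row[OF gGL a(1)] by blast
      have "B = piq n q g (blk n q i)" using KL[OF a(1) i(1) i(2)] a by simp
      then show "B \<in> piq n q g ` blocks n q" using blk_blocks[OF i(1)] by blast
    qed
  qed
qed

lemma piq_permutes: "piq n q g permutes blocks n q"
  by (rule bij_imp_permutes[OF piq_bij]) (simp add: piq_out)

lemma piq_card: assumes "B \<in> blocks n q" shows "card (piq n q g B) = card B"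
proof -
  obtain i a0 where ia: "i < n" "a0 < n" "B = blk n q i" "g$$(a0,i) \<noteq> 0" "piq n q g B = blk n q a0" using KL'[OF assms] by blast
  obtain p where p: "p permutes {..<n}" "\<forall>a<n. g$$(a, p a) \<noteq> 0" using GL_row_col[OF gGL] by blast
  have "p ` blk n q a0 = blk n q i"
  proof
    show "p ` blk n q a0 \<subseteq> blk n q i"
    proof
      fix y assume "y \<in> p ` blk n q a0"
      then obtain x where x: "x \<in> blk n q a0" "y = p x" by blast
      then have xn: "x < n" "rq n q x a0" by (simp_all add: mem_blk)
      have pxn: "p x < n" using permutes_in_image[OF p(1)] xn(1) by simp
      have "rq n q (p x) i" using good_rq2[OF xn(1) pxn ia(2) ia(1) _ ia(4) xn(2)] p(2) xn(1) by blast
      then show "y \<in> blk n q i" using x pxn by (simp add: mem_blk)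
    qed
  next
    show "blk n q i \<subseteq> p ` blk n q a0"
    proof
      fix y assume "y \<in> blk n q i"
      then have yn: "y < n" "rq n q y i" by (simp_all add: mem_blk)
      define x where "x = inv_into UNIV p y"
      have xn: "x < n" using permutes_in_image[OF permutes_inv[OF p(1)]] yn(1) x_def by simp
      have pxy: "p x = y" using permutes_inverses[OF p(1)] x_def by simp
      have "g$$(x,y) \<noteq> 0" using p(2) xn pxy by metis
      then have "rq n q x a0" using good_rq1[OF xn yn(1) ia(2) ia(1) _ ia(4) yn(2)] by blast
      then have "x \<in> blk n q a0" using xn by (simp add: mem_blk)
      then show "y \<in> p ` blk n q a0" using pxy by blast
    qed
  qed
  moreover have "inj_on p (blk n q a0)" using permutes_inj[OF p(1)] by (simp add: inj_on_def inj_def)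
  ultimately have "card (blk n q a0) = card (blk n q i)" using card_image by metis
  then show ?thesis using ia by simp
qed

lemma piq_q: assumes "B \<in> blocks n q" "C \<in> blocks n q" "i \<in> B" "j \<in> C" "a \<in> piq n q g B" "b \<in> piq n q g C"
  shows "q i j = q a b"
proof -
  obtain i0 a0 where ia: "i0 < n" "a0 < n" "B = blk n q i0" "g$$(a0,i0) \<noteq> 0" "piq n q g B = blk n q a0" using KL'[OF assms(1)] by blast
  obtain j0 b0 where jb: "j0 < n" "b0 < n" "C = blk n q j0" "g$$(b0,j0) \<noteq> 0" "piq n q g C = blk n q b0" using KL'[OF assms(2)] by blast
  have i: "i < n" "rq n q i i0" using assms(3) ia(3) by (simp_all add: mem_blk)
  have j: "j < n" "rq n q j j0" using assms(4) jb(3) by (simp_all add: mem_blk)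
  have a: "a < n" "rq n q a a0" using assms(5) ia(5) by (simp_all add: mem_blk)
  have b: "b < n" "rq n q b b0" using assms(6) jb(5) by (simp_all add: mem_blk)
  have "q i j = q i0 j" using q_row[OF qpm] i j(1) by blast
  also have "\<dots> = q i0 j0" using q_col[OF qpm ia(1) j(1) jb(1) j(2)] .
  also have "\<dots> = q a0 b0" using good_q ia jb by metis
  also have "\<dots> = q a b0" using q_row[OF qpm] a jb(2) rq_sym by metis
  also have "\<dots> = q a b" using q_col[OF qpm a(1) b(1) jb(2) b(2)] by simp
  finally show ?thesis .
qed

lemma piq_stab: "piq n q g \<in> stab n q"
  unfolding stab_def
proof (intro CollectI conjI ballI allI impI)
  show "piq n q g permutes blocks n q" by (rule piq_permutes)
next
  fix B assume "B \<in> blocks n q" then show "card (piq n q g B) = card B" by (rule piq_card)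
next
  fix B C a b assume B: "B \<in> blocks n q" and C: "C \<in> blocks n q" and a: "a < card B" and b: "b < card C"
  have fB: "finite B" "finite C" using B C blocks_finite by auto
  have fB': "finite (piq n q g B)" "finite (piq n q g C)" using B C blocks_finite piq_blocks by auto
  show "q (enum B a) (enum C b) = q (enum (piq n q g B) a) (enum (piq n q g C) b)"
    by (rule piq_q[OF B C enum_in[OF fB(1) a] enum_in[OF fB(2) b] enum_in[OF fB'(1)] enum_in[OF fB'(2)]])
       (simp_all add: piq_card B C a b)
qed

end
definition fs :: "nat \<Rightarrow> (nat \<Rightarrow> nat \<Rightarrow> 'k) \<Rightarrow> (nat set \<Rightarrow> nat set) \<Rightarrow> nat \<Rightarrow> nat" where
  "fs n q \<sigma> b = enum (\<sigma> (blk n q b)) (pos_in (blk n q b) b)"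

lemma iota_entry: "a < n \<Longrightarrow> b < n \<Longrightarrow> iota n q \<sigma> $$ (a,b) = (if a = fs n q \<sigma> b then 1 else 0)"
  unfolding iota_def fs_def by (simp add: block_of_eq)

lemma iota_carrier: "iota n q \<sigma> \<in> carrier_mat n n"
  unfolding iota_def by simp

context
  fixes n :: nat and q :: "nat \<Rightarrow> nat \<Rightarrow> 'k::field" and \<sigma> :: "nat set \<Rightarrow> nat set"
  assumes qpm: "qpm n q" and st: "\<sigma> \<in> stab n q"
begin

lemma st_perm: "\<sigma> permutes blocks n q" using st unfolding stab_def by blast
lemma st_card: "B \<in> blocks n q \<Longrightarrow> card (\<sigma> B) = card B" using st unfolding stab_def by blast
lemma st_q: "B \<in> blocks n q \<Longrightarrow> C \<in> blocks n q \<Longrightarrow> a < card B \<Longrightarrow> b < card C \<Longrightarrow>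
        q (enum B a) (enum C b) = q (enum (\<sigma> B) a) (enum (\<sigma> C) b)"
  using st unfolding stab_def by blast
lemma st_blocks: "B \<in> blocks n q \<Longrightarrow> \<sigma> B \<in> blocks n q"
  using permutes_in_image[OF st_perm] by blast

lemma fs_in: assumes "b < n" shows "fs n q \<sigma> b \<in> \<sigma> (blk n q b)" "fs n q \<sigma> b < n"
proof -
  have B: "blk n q b \<in> blocks n q" using blk_blocks assms .
  have fB: "finite (blk n q b)" using blocks_finite B .
  have p: "pos_in (blk n q b) b < card (blk n q b)" using pos_in[OF fB blk_in[OF assms]] by blast
  have sB: "\<sigma> (blk n q b) \<in> blocks n q" using st_blocks B .
  have "pos_in (blk n q b) b < card (\<sigma> (blk n q b))" using p st_card B by simp
  then show "fs n q \<sigma> b \<in> \<sigma> (blk n q b)" unfolding fs_def using enum_in blocks_finite sB by blast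
  then show "fs n q \<sigma> b < n" using blocks_sub sB by blast
qed

lemma fs_blk: assumes "b < n" shows "\<sigma> (blk n q b) = blk n q (fs n q \<sigma> b)"
  using blocks_mem_blk[OF st_blocks[OF blk_blocks[OF assms]] fs_in(1)[OF assms]] .

lemma fs_inj: assumes "b < n" "c < n" "fs n q \<sigma> b = fs n q \<sigma> c" shows "b = c"
proof -
  have "\<sigma> (blk n q b) = \<sigma> (blk n q c)" using fs_blk assms by metis
  then have e: "blk n q b = blk n q c"
    using permutes_inj[OF st_perm] by (simp add: inj_def)
  let ?B = "blk n q b"
  have B: "?B \<in> blocks n q" using blk_blocks assms(1) .
  have fB: "finite ?B" using blocks_finite B .
  have pb: "pos_in ?B b < card ?B \<and> enum ?B (pos_in ?B b) = b" using pos_in[OF fB blk_in[OF assms(1)]] .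
  have pc: "pos_in ?B c < card ?B \<and> enum ?B (pos_in ?B c) = c" using pos_in[OF fB] blk_in[OF assms(2)] e by metis
  have sB: "\<sigma> ?B \<in> blocks n q" using st_blocks B .
  have "enum (\<sigma> ?B) (pos_in ?B b) = enum (\<sigma> ?B) (pos_in ?B c)" using assms(3) e unfolding fs_def by simp
  then have "pos_in ?B b = pos_in ?B c"
    using enum_inj[OF blocks_finite[OF sB]] pb pc st_card[OF B] by simp
  then show ?thesis using pb pc by metis
qed

lemma fs_q: assumes "i < n" "j < n" shows "q i j = q (fs n q \<sigma> i) (fs n q \<sigma> j)"
proof -
  let ?B = "blk n q i" and ?C = "blk n q j"
  have B: "?B \<in> blocks n q" and C: "?C \<in> blocks n q" using blk_blocks assms by auto
  have pb: "pos_in ?B i < card ?B \<and> enum ?B (pos_in ?B i) = i" using pos_in[OF blocks_finite[OF B] blk_in[OF assms(1)]] .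
  have pc: "pos_in ?C j < card ?C \<and> enum ?C (pos_in ?C j) = j" using pos_in[OF blocks_finite[OF C] blk_in[OF assms(2)]] .
  show ?thesis using st_q[OF B C, of "pos_in ?B i" "pos_in ?C j"] pb pc unfolding fs_def by simp
qed

lemma iota_good: "good n q (iota n q \<sigma>)"
  unfolding good_def
proof (intro allI impI)
  fix a b i j assume H: "a < n" "b < n" "i < n" "j < n" "iota n q \<sigma> $$ (a, i) \<noteq> 0" "iota n q \<sigma> $$ (b, j) \<noteq> 0"
  then have "a = fs n q \<sigma> i" "b = fs n q \<sigma> j" using iota_entry by (metis, metis)
  then show "q a b = q i j" using fs_q H by simp
qed

lemma iota_GL: "iota n q \<sigma> \<in> carrier (GL n)"
proof -
  let ?M = "iota n q \<sigma>"
  have M: "?M \<in> carrier_mat n n" by (rule iota_carrier)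
  have MT: "transpose_mat ?M \<in> carrier_mat n n" using M by simp
  have "transpose_mat ?M * ?M = 1\<^sub>m n"
  proof (rule eq_matI)
    fix b c assume bc: "b < dim_row (1\<^sub>m n :: 'k mat)" "c < dim_col (1\<^sub>m n :: 'k mat)"
    then have bc': "b < n" "c < n" by auto
    have "(transpose_mat ?M * ?M) $$ (b,c) = (\<Sum>a<n. transpose_mat ?M $$ (b,a) * ?M $$ (a,c))"
      using mult_entry[OF MT M bc'] .
    also have "\<dots> = (\<Sum>a<n. if a = fs n q \<sigma> b then (if fs n q \<sigma> b = fs n q \<sigma> c then 1 else 0) else 0)"
      using bc' M by (intro sum.cong refl) (auto simp: iota_entry)
    also have "\<dots> = (if fs n q \<sigma> b = fs n q \<sigma> c then 1 else 0)"
      using fs_in(2)[OF bc'(1)] by simp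
    also have "\<dots> = 1\<^sub>m n $$ (b,c)" using fs_inj bc' by auto
    finally show "(transpose_mat ?M * ?M) $$ (b,c) = 1\<^sub>m n $$ (b,c)" .
  qed (use M in auto)
  moreover then have "?M * transpose_mat ?M = 1\<^sub>m n" using mat_mult_left_right_inverse[OF MT M] by blast
  ultimately have "invertible_mat ?M" unfolding invertible_mat_def inverts_mat_def using M by auto
  then show ?thesis using M by (simp add: GL_def)
qed

lemma piq_iota: "piq n q (iota n q \<sigma>) = \<sigma>"
proof
  fix B
  show "piq n q (iota n q \<sigma>) B = \<sigma> B"
  proof (cases "B \<in> blocks n q")
    case False
    then show ?thesis using piq_out permutes_not_in[OF st_perm] by metis
  next
    case True
    then obtain i where i: "i < n" "B = blk n q i" using blocks_ne by blast
    have "iota n q \<sigma> $$ (fs n q \<sigma> i, i) \<noteq> 0" by (simp add: iota_entry[OF fs_in(2)[OF i(1)] i(1)])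
    then have "piq n q (iota n q \<sigma>) (blk n q i) = blk n q (fs n q \<sigma> i)"
      using KL[OF qpm iota_GL iota_good fs_in(2)[OF i(1)] i(1)] by blast
    then show ?thesis using fs_blk i by simp
  qed
qed

end
definition restr :: "nat \<Rightarrow> 'k::field mat \<Rightarrow> nat set \<Rightarrow> 'k mat" where
  "restr n g S = mat n n (\<lambda>(a,b). if b \<in> S then g$$(a,b) else (if a = b then 1 else 0))"

definition bd :: "nat \<Rightarrow> (nat \<Rightarrow> nat \<Rightarrow> 'k) \<Rightarrow> 'k::field mat \<Rightarrow> bool" where
  "bd n q g \<longleftrightarrow> (\<forall>a<n. \<forall>b<n. g$$(a,b) \<noteq> 0 \<longrightarrow> rq n q a b)"

lemma bclosedD: "bclosed n q S \<Longrightarrow> x < n \<Longrightarrow> y < n \<Longrightarrow> rq n q x y \<Longrightarrow> y \<in> S \<Longrightarrow> x \<in> S"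
  unfolding bclosed_def by blast

lemma restr_entry: "a < n \<Longrightarrow> b < n \<Longrightarrow> restr n g S $$ (a,b) = (if b \<in> S then g$$(a,b) else (if a = b then 1 else 0))"
  unfolding restr_def by simp

lemma restr_carrier: "restr n g S \<in> carrier_mat n n" unfolding restr_def by simp

lemma bdD: "bd n q g \<Longrightarrow> a < n \<Longrightarrow> b < n \<Longrightarrow> g$$(a,b) \<noteq> 0 \<Longrightarrow> rq n q a b"
  unfolding bd_def by blast

lemma restr_mult: assumes g: "g \<in> carrier_mat n n" and h: "h \<in> carrier_mat n n" and bh: "bd n q h" and S: "bclosed n q S"
  shows "restr n g S * restr n h S = restr n (g * h) S"
proof (rule eq_matI)
  fix a c assume "a < dim_row (restr n (g * h) S)" "c < dim_col (restr n (g * h) S)"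
  then have ac: "a < n" "c < n" by (simp_all add: restr_def)
  have "(restr n g S * restr n h S) $$ (a,c) = (\<Sum>k<n. restr n g S $$ (a,k) * restr n h S $$ (k,c))"
    using mult_entry[OF restr_carrier restr_carrier ac] .
  also have "\<dots> = restr n (g * h) S $$ (a,c)"
  proof (cases "c \<in> S")
    case True
    have "(\<Sum>k<n. restr n g S $$ (a,k) * restr n h S $$ (k,c)) = (\<Sum>k<n. g $$ (a,k) * h $$ (k,c))"
    proof (rule sum.cong[OF refl])
      fix k assume k: "k \<in> {..<n}"
      show "restr n g S $$ (a,k) * restr n h S $$ (k,c) = g $$ (a,k) * h $$ (k,c)"
      proof (cases "h $$ (k,c) = 0")
        case True then show ?thesis using k ac \<open>c \<in> S\<close> by (simp add: restr_entry)
      next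
        case False
        then have "rq n q k c" using bdD[OF bh] k ac by simp
        then have "k \<in> S" using bclosedD[OF S] \<open>c \<in> S\<close> k ac by simp
        then show ?thesis using k ac \<open>c \<in> S\<close> by (simp add: restr_entry)
      qed
    qed
    also have "\<dots> = (g * h) $$ (a,c)" using mult_entry[OF g h ac] by simp
    finally show ?thesis using True ac by (simp add: restr_entry)
  next
    case False
    have "(\<Sum>k<n. restr n g S $$ (a,k) * restr n h S $$ (k,c)) = (\<Sum>k<n. if k = c then restr n g S $$ (a,k) else 0)"
      using False ac by (intro sum.cong refl) (simp add: restr_entry)
    also have "\<dots> = restr n g S $$ (a,c)" using ac by simp
    finally show ?thesis using False ac by (simp add: restr_entry)
  qed
  finally show "(restr n g S * restr n h S) $$ (a,c) = restr n (g * h) S $$ (a,c)" .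
qed (simp_all add: restr_def)

lemma restr_one: "restr n (1\<^sub>m n) S = 1\<^sub>m n"
  by (rule eq_matI) (auto simp: restr_def)

lemma restr_empty: "restr n g {} = 1\<^sub>m n"
  by (rule eq_matI) (auto simp: restr_def)

lemma restr_all: "g \<in> carrier_mat n n \<Longrightarrow> restr n g {..<n} = g"
  by (rule eq_matI) (auto simp: restr_def)

lemma restr_split: assumes g: "g \<in> carrier_mat n n" and bg: "bd n q g" and S: "bclosed n q S" and disj: "B \<inter> S = {}"
  shows "restr n g (B \<union> S) = restr n g B * restr n g S"
proof (rule eq_matI)
  fix a c assume "a < dim_row (restr n g B * restr n g S)" "c < dim_col (restr n g B * restr n g S)"
  then have ac: "a < n" "c < n" by (simp_all add: restr_def)
  have "(restr n g B * restr n g S) $$ (a,c) = (\<Sum>k<n. restr n g B $$ (a,k) * restr n g S $$ (k,c))"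
    using mult_entry[OF restr_carrier restr_carrier ac] .
  also have "\<dots> = restr n g (B \<union> S) $$ (a,c)"
  proof (cases "c \<in> S")
    case True
    have "(\<Sum>k<n. restr n g B $$ (a,k) * restr n g S $$ (k,c)) = (\<Sum>k<n. if k = a then g $$ (k,c) else 0)"
    proof (rule sum.cong[OF refl])
      fix k assume k: "k \<in> {..<n}"
      show "restr n g B $$ (a,k) * restr n g S $$ (k,c) = (if k = a then g $$ (k,c) else 0)"
      proof (cases "g $$ (k,c) = 0")
        case True then show ?thesis using k ac \<open>c \<in> S\<close> by (auto simp: restr_entry)
      next
        case False
        then have "rq n q k c" using bdD[OF bg] k ac by simp
        then have "k \<in> S" using bclosedD[OF S] \<open>c \<in> S\<close> k ac by simp
        then have "k \<notin> B" using disj by blast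
        then show ?thesis using k ac \<open>c \<in> S\<close> \<open>k \<in> S\<close> by (simp add: restr_entry)
      qed
    qed
    also have "\<dots> = g $$ (a,c)" using ac by simp
    finally show ?thesis using True ac by (simp add: restr_entry)
  next
    case False
    have "(\<Sum>k<n. restr n g B $$ (a,k) * restr n g S $$ (k,c)) = (\<Sum>k<n. if k = c then restr n g B $$ (a,k) else 0)"
      using False ac by (intro sum.cong refl) (simp add: restr_entry)
    also have "\<dots> = restr n g B $$ (a,c)" using ac by simp
    finally show ?thesis using False ac by (simp add: restr_entry)
  qed
  finally show "restr n g (B \<union> S) $$ (a,c) = (restr n g B * restr n g S) $$ (a,c)" by simp
qed (simp_all add: restr_def)

lemma bd_inv: assumes g: "g \<in> carrier_mat n n" and h: "h \<in> carrier_mat n n" and bg: "bd n q g" and hg: "h * g = 1\<^sub>m n"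
  shows "bd n q h"
  unfolding bd_def
proof (intro allI impI)
  fix a c assume a: "a < n" and c: "c < n" and hac: "h $$ (a,c) \<noteq> 0"
  show "rq n q a c"
  proof (rule ccontr)
    assume nr: "\<not> rq n q a c"
    let ?B = "blk n q c"
    have S: "bclosed n q ?B" by (rule bclosed_blk)
    have aB: "a \<notin> ?B" using nr by (simp add: mem_blk)
    have cB: "c \<in> ?B" using blk_in c .
    have "restr n h ?B * restr n g ?B = 1\<^sub>m n" using restr_mult[OF h g bg S] hg restr_one by simp
    then have e: "restr n g ?B * restr n h ?B = 1\<^sub>m n"
      using mat_mult_left_right_inverse[OF restr_carrier restr_carrier] by blast
    have "(restr n g ?B * restr n h ?B) $$ (a,c) = (\<Sum>k<n. restr n g ?B $$ (a,k) * restr n h ?B $$ (k,c))"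
      using mult_entry[OF restr_carrier restr_carrier a c] .
    also have "\<dots> = (\<Sum>k<n. if k = a then h $$ (k,c) else 0)"
    proof (rule sum.cong[OF refl])
      fix k assume k: "k \<in> {..<n}"
      show "restr n g ?B $$ (a,k) * restr n h ?B $$ (k,c) = (if k = a then h $$ (k,c) else 0)"
      proof (cases "k \<in> ?B")
        case True
        have "g $$ (a,k) = 0"
        proof (rule ccontr)
          assume "g $$ (a,k) \<noteq> 0"
          then have "rq n q a k" using bdD[OF bg a] k by simp
          then show False using True aB a k bclosedD[OF S] by simp
        qed
        then show ?thesis using True k a c cB aB by (auto simp: restr_entry)
      next
        case False then show ?thesis using k a c cB by (simp add: restr_entry)
      qed
    qed
    also have "\<dots> = h $$ (a,c)" using a by simp
    finally have "h $$ (a,c) = 1\<^sub>m n $$ (a,c)" using e by simp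
    moreover have "a \<noteq> c" using aB cB by blast
    ultimately show False using hac a c by simp
  qed
qed

lemma bd_mult: assumes g: "g \<in> carrier_mat n n" and h: "h \<in> carrier_mat n n" and bg: "bd n q g" and bh: "bd n q h"
  shows "bd n q (g * h)"
  unfolding bd_def
proof (intro allI impI)
  fix a c assume a: "a < n" and c: "c < n" and ne: "(g * h) $$ (a,c) \<noteq> 0"
  then have "(\<Sum>k<n. g $$ (a,k) * h $$ (k,c)) \<noteq> 0" using mult_entry[OF g h a c] by simp
  then obtain k where k: "k \<in> {..<n}" "g $$ (a,k) * h $$ (k,c) \<noteq> 0"
    by (meson sum.not_neutral_contains_not_neutral)
  then have "rq n q a k" "rq n q k c" using bdD[OF bg] bdD[OF bh] a c by auto
  then show "rq n q a c" by (rule rq_trans)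
qed

lemma bd_one: "bd n q (1\<^sub>m n)"
  unfolding bd_def by simp

context
  fixes n :: nat and q :: "nat \<Rightarrow> nat \<Rightarrow> 'k::field"
  assumes qpm: "qpm n q"
begin

lemma bd_good: assumes "bd n q g" shows "good n q g"
  unfolding good_def
proof (intro allI impI)
  fix a b i j assume H: "a < n" "b < n" "i < n" "j < n" "g $$ (a,i) \<noteq> 0" "g $$ (b,j) \<noteq> 0"
  have "rq n q a i" "rq n q b j" using bdD[OF assms] H by auto
  then show "q a b = q i j" using q_row[OF qpm] q_col[OF qpm] H by metis
qed

lemma bd_piq: assumes gGL: "g \<in> carrier (GL n)" and b: "bd n q g" shows "piq n q g = id"
proof
  fix B
  show "piq n q g B = id B"
  proof (cases "B \<in> blocks n q")
    case False then show ?thesis by (simp add: piq_out)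
  next
    case True
    then obtain i where i: "i < n" "B = blk n q i" using blocks_ne by blast
    obtain a where a: "a < n" "g $$ (a,i) \<noteq> 0" using GL_col[OF gGL i(1)] by blast
    have "piq n q g B = blk n q a" using KL[OF qpm gGL bd_good[OF b] a(1) i(1) a(2)] i by simp
    also have "\<dots> = B" using blk_eqI bdD[OF b a(1) i(1) a(2)] i by metis
    finally show ?thesis by simp
  qed
qed

lemma piq_bd: assumes gGL: "g \<in> carrier (GL n)" and gg: "good n q g" and p: "piq n q g = id" shows "bd n q g"
  unfolding bd_def
proof (intro allI impI)
  fix a b assume a: "a < n" and b: "b < n" and ne: "g $$ (a,b) \<noteq> 0"
  have "blk n q b = blk n q a" using KL[OF qpm gGL gg a b ne] p by simp
  then show "rq n q a b" using blk_eq_iff a b by metis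
qed

lemma restr_GL_block: assumes gGL: "g \<in> carrier (GL n)" and bg: "bd n q g" and B: "B \<in> blocks n q"
  shows "restr n g B \<in> GL_block n B"
proof -
  have gc: "g \<in> carrier_mat n n" "invertible_mat g" using gGL GL_carrier by auto
  obtain h where h: "h \<in> carrier_mat n n" "g * h = 1\<^sub>m n" "h * g = 1\<^sub>m n" using inv_mat_ex[OF gc] by blast
  have bh: "bd n q h" using bd_inv[OF gc(1) h(1) bg h(3)] .
  have SB: "bclosed n q B" using bclosed_blocks B .
  have 1: "restr n g B * restr n h B = 1\<^sub>m n" using restr_mult[OF gc(1) h(1) bh SB] h(2) restr_one by simp
  have 2: "restr n h B * restr n g B = 1\<^sub>m n" using restr_mult[OF h(1) gc(1) bg SB] h(3) restr_one by simp
  have inv: "invertible_mat (restr n g B)"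
  proof -
    have "inverts_mat (restr n g B) (restr n h B)" "inverts_mat (restr n h B) (restr n g B)"
      using 1 2 by (simp_all add: inverts_mat_def restr_def)
    moreover have "square_mat (restr n g B)" by (simp add: restr_def)
    ultimately show ?thesis unfolding invertible_mat_def by blast
  qed
  have "\<forall>a<n. \<forall>b<n. (b \<notin> B \<longrightarrow> restr n g B $$ (a,b) = (if a = b then 1 else 0)) \<and>
     (b \<in> B \<and> a \<notin> B \<longrightarrow> restr n g B $$ (a,b) = 0)"
  proof (intro allI impI conjI)
    fix a b assume "a < n" "b < n" "b \<notin> B"
    then show "restr n g B $$ (a,b) = (if a = b then 1 else 0)" by (simp add: restr_entry)
  next
    fix a b assume ab: "a < n" "b < n" "b \<in> B \<and> a \<notin> B"
    show "restr n g B $$ (a,b) = 0"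
    proof (rule ccontr)
      assume "restr n g B $$ (a,b) \<noteq> 0"
      then have "g $$ (a,b) \<noteq> 0" using ab by (simp add: restr_entry)
      then have "rq n q a b" using bdD[OF bg] ab by simp
      then have "a \<in> B" using bclosedD[OF SB] ab by blast
      then show False using ab(3) by simp
    qed
  qed
  moreover have c: "restr n g B \<in> carrier (GL n)" using inv restr_carrier[of n g B] by (simp add: GL_def)
  ultimately show ?thesis unfolding GL_block_def by blast
qed

lemma gen_restr: assumes gGL: "g \<in> carrier (GL n)" and bg: "bd n q g"
  shows "F \<subseteq> blocks n q \<Longrightarrow> restr n g (\<Union>F) \<in> generate (GL n) (\<Union>B\<in>blocks n q. GL_block n B)"
proof (induction F rule: infinite_finite_induct)
  case (infinite F)
  then show ?case using finite_subset[OF infinite.prems finite_blocks] by simp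
next
  case empty
  then show ?case using generate.one[of "GL n"] by (simp add: restr_empty GL_def)
next
  case (insert B F)
  have gc: "g \<in> carrier_mat n n" using gGL GL_carrier by auto
  have B: "B \<in> blocks n q" and F: "F \<subseteq> blocks n q" using insert.prems by auto
  have SF: "bclosed n q (\<Union>F)"
  proof (rule bclosed_Union)
    fix C assume "C \<in> F" then have "C \<in> blocks n q" using F by (rule subsetD[rotated])
    then show "bclosed n q C" by (rule bclosed_blocks)
  qed
  have disj: "B \<inter> \<Union>F = {}"
  proof (rule ccontr)
    assume "B \<inter> \<Union>F \<noteq> {}"
    then obtain x C where xC: "x \<in> B" "C \<in> F" "x \<in> C" by blast
    have "C \<in> blocks n q" using F xC(2) by (rule subsetD)
    then have "B = C" using blocks_disj[OF B _ xC(1) xC(3)] by simp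
    then show False using insert.hyps(2) xC(2) by simp
  qed
  have e: "restr n g (\<Union>(insert B F)) = restr n g B \<otimes>\<^bsub>GL n\<^esub> restr n g (\<Union>F)"
    using restr_split[OF gc bg SF disj] by (simp add: GL_def)
  have "restr n g B \<in> generate (GL n) (\<Union>B\<in>blocks n q. GL_block n B)"
    by (rule generate.incl) (use B restr_GL_block[OF gGL bg B] in blast)
  then show ?case unfolding e using insert.IH[OF F] by (rule generate.eng)
qed

lemma kernel_sub: assumes "g \<in> carrier (GL n)" "bd n q g"
  shows "g \<in> generate (GL n) (\<Union>B\<in>blocks n q. GL_block n B)"
proof -
  have "restr n g (\<Union>(blocks n q)) \<in> generate (GL n) (\<Union>B\<in>blocks n q. GL_block n B)"
    using gen_restr[OF assms order_refl] .
  moreover have "restr n g (\<Union>(blocks n q)) = g"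
    using assms(1) by (simp add: Union_blocks restr_all GL_carrier)
  ultimately show ?thesis by simp
qed

lemma GL_block_bd: assumes B: "B \<in> blocks n q" and hB: "h \<in> GL_block n B"
  shows "h \<in> carrier (GL n) \<and> bd n q h"
proof -
  have hGL: "h \<in> carrier (GL n)" using hB by (simp add: GL_block_def)
  have hB': "\<forall>a<n. \<forall>b<n. (b \<notin> B \<longrightarrow> h $$ (a,b) = (if a = b then 1 else 0)) \<and>
     (b \<in> B \<and> a \<notin> B \<longrightarrow> h $$ (a,b) = 0)" using hB by (simp add: GL_block_def)
  have "bd n q h" unfolding bd_def
  proof (intro allI impI)
    fix a b assume ab: "a < n" "b < n" "h $$ (a,b) \<noteq> 0"
    note hab = hB'[rule_format, OF ab(1) ab(2)]
    show "rq n q a b"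
    proof (cases "b \<in> B")
      case True
      then have "a \<in> B" using hab ab(3) by blast
      then have "a \<in> blk n q b" using blocks_mem_blk[OF B True] by simp
      then show ?thesis by (simp add: mem_blk)
    next
      case False
      then have "h $$ (a,b) = (if a = b then 1 else 0)" using hab by blast
      then have "a = b" using ab(3) by (simp split: if_splits)
      then show ?thesis by simp
    qed
  qed
  then show ?thesis using hGL by simp
qed

lemma gen_bd: "x \<in> generate (GL n) (\<Union>B\<in>blocks n q. GL_block n B) \<Longrightarrow> x \<in> carrier (GL n) \<and> bd n q x"
proof (induction rule: generate.induct)
  case one
  have "\<one>\<^bsub>GL n\<^esub> \<in> carrier (GL n)" using monoid.one_closed[OF group.is_monoid[OF group_GL]] .
  then show ?case using bd_one[of n q] by (simp add: GL_def)
next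
  case (incl h)
  then obtain B where B: "B \<in> blocks n q" "h \<in> GL_block n B" by blast
  show ?case using GL_block_bd[OF B] .
next
  case (inv h)
  then obtain B where B: "B \<in> blocks n q" "h \<in> GL_block n B" by blast
  have hh: "h \<in> carrier (GL n)" "bd n q h" using GL_block_bd[OF B] by auto
  have ic: "inv\<^bsub>GL n\<^esub> h \<in> carrier (GL n)" using group.inv_closed[OF group_GL hh(1)] .
  have "inv\<^bsub>GL n\<^esub> h \<otimes>\<^bsub>GL n\<^esub> h = \<one>\<^bsub>GL n\<^esub>" using group.l_inv[OF group_GL hh(1)] .
  then have e: "inv\<^bsub>GL n\<^esub> h * h = 1\<^sub>m n" by (simp add: GL_def)
  have "bd n q (inv\<^bsub>GL n\<^esub> h)"
    using bd_inv[OF _ _ hh(2) e] hh(1) ic by (simp add: GL_def)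
  then show ?case using ic by simp
next
  case (eng h1 h2)
  have c: "h1 \<otimes>\<^bsub>GL n\<^esub> h2 \<in> carrier (GL n)"
    using monoid.m_closed[OF group.is_monoid[OF group_GL]] eng.IH by blast
  have "bd n q (h1 * h2)" using bd_mult eng.IH by (metis GL_carrier)
  then show ?case using c by (simp add: GL_def)
qed

end
lemma AutGr_mult: "x \<otimes>\<^bsub>AutGr n q\<^esub> y = x * y" by (simp add: AutGr_def)
lemma StabG_mult: "x \<otimes>\<^bsub>StabG n q\<^esub> y = x \<circ> y" by (simp add: StabG_def)
lemma StabG_one: "\<one>\<^bsub>StabG n q\<^esub> = id" by (simp add: StabG_def)
lemma StabG_carrier: "carrier (StabG n q) = stab n q" by (simp add: StabG_def)

context
  fixes n :: nat and q :: "nat \<Rightarrow> nat \<Rightarrow> 'k::field"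
  assumes qpm: "qpm n q"
begin

lemma piq_hom_mult: assumes g: "g \<in> carrier (AutGr n q)" and h: "h \<in> carrier (AutGr n q)"
  shows "piq n q (g * h) = piq n q g \<circ> piq n q h"
proof
  fix B
  have gG: "g \<in> carrier (GL n)" "good n q g" using Aut_iff_good[OF qpm] g by auto
  have hG: "h \<in> carrier (GL n)" "good n q h" using Aut_iff_good[OF qpm] h by auto
  have ghG: "g * h \<in> carrier (GL n)"
    using monoid.m_closed[OF group.is_monoid[OF group_GL] gG(1) hG(1)] by (simp add: GL_def)
  have gc: "g \<in> carrier_mat n n" and hc: "h \<in> carrier_mat n n" using gG(1) hG(1) GL_carrier by auto
  show "piq n q (g * h) B = (piq n q g \<circ> piq n q h) B"
  proof (cases "B \<in> blocks n q")
    case False then show ?thesis by (simp add: piq_out)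
  next
    case True
    obtain i where i: "i < n" "B = blk n q i" using blocks_ne True by blast
    obtain a0 where a0: "a0 < n" "(g * h) $$ (a0,i) \<noteq> 0" using GL_col[OF ghG i(1)] by blast
    have iB: "i \<in> B" using blk_in[OF i(1)] i(2) by simp
    obtain a b where ab: "a < n" "b \<in> B" "(g * h) $$ (a,b) \<noteq> 0" "piq n q (g * h) B = blk n q a"
      using piq_char[OF True a0(1) iB a0(2)] by blast
    have bn: "b < n" using ab(2) blocks_sub True by blast
    have "(\<Sum>k<n. g $$ (a,k) * h $$ (k,b)) \<noteq> 0" using mult_entry[OF gc hc ab(1) bn] ab(3) by simp
    then obtain k where k: "k \<in> {..<n}" "g $$ (a,k) * h $$ (k,b) \<noteq> 0"
      by (meson sum.not_neutral_contains_not_neutral)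
    then have kn: "k < n" "g $$ (a,k) \<noteq> 0" "h $$ (k,b) \<noteq> 0" by auto
    have "piq n q h B = blk n q k"
      using KL[OF qpm hG(1) hG(2) kn(1) bn kn(3)] blocks_mem_blk[OF True ab(2)] by simp
    moreover have "piq n q g (blk n q k) = blk n q a" using KL[OF qpm gG(1) gG(2) ab(1) kn(1) kn(2)] .
    ultimately show ?thesis using ab(4) by simp
  qed
qed

end

theorem proposition2p6:
  fixes q :: "nat \<Rightarrow> nat \<Rightarrow> 'k::field" and n :: nat
  assumes "qpm n q"
  shows "\<exists>\<pi>. \<pi> \<in> hom (AutGr n q) (StabG n q)
           \<and> \<pi> ` carrier (AutGr n q) = carrier (StabG n q)
           \<and> kernel (AutGr n q) (StabG n q) \<pi> = generate (GL n) (\<Union>B\<in>blocks n q. GL_block n B)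
           \<and> (\<forall>\<sigma>\<in>carrier (StabG n q). \<pi> (iota n q \<sigma>) = \<sigma>)"
proof (intro exI conjI)
  note qpm = assms
  show hom: "piq n q \<in> hom (AutGr n q) (StabG n q)"
    unfolding hom_def
  proof (intro CollectI conjI ballI)
    show "piq n q \<in> carrier (AutGr n q) \<rightarrow> carrier (StabG n q)"
    proof (rule Pi_I)
      fix g assume g: "g \<in> carrier (AutGr n q)"
      have gG: "g \<in> carrier (GL n)" "good n q g" using Aut_iff_good[OF qpm] g by auto
      show "piq n q g \<in> carrier (StabG n q)" using piq_stab[OF qpm gG] by (simp add: StabG_carrier)
    qed
  next
    fix x y assume x: "x \<in> carrier (AutGr n q)" and y: "y \<in> carrier (AutGr n q)"
    show "piq n q (x \<otimes>\<^bsub>AutGr n q\<^esub> y) = piq n q x \<otimes>\<^bsub>StabG n q\<^esub> piq n q y"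
      using piq_hom_mult[OF qpm x y] by (simp add: AutGr_mult StabG_mult)
  qed
next
  note qpm = assms
  show "piq n q ` carrier (AutGr n q) = carrier (StabG n q)"
  proof
    show "piq n q ` carrier (AutGr n q) \<subseteq> carrier (StabG n q)"
    proof
      fix s assume "s \<in> piq n q ` carrier (AutGr n q)"
      then obtain g where g: "g \<in> carrier (AutGr n q)" "s = piq n q g" by blast
      have gG: "g \<in> carrier (GL n)" "good n q g" using Aut_iff_good[OF qpm] g(1) by auto
      show "s \<in> carrier (StabG n q)" using piq_stab[OF qpm gG] g(2) by (simp add: StabG_carrier)
    qed
  next
    show "carrier (StabG n q) \<subseteq> piq n q ` carrier (AutGr n q)"
    proof
      fix s assume "s \<in> carrier (StabG n q)"
      then have st: "s \<in> stab n q" by (simp add: StabG_carrier)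
      have "iota n q s \<in> carrier (AutGr n q)"
        using good_imp_Aut[OF qpm iota_GL[OF qpm st] iota_good[OF qpm st]] .
      moreover have "piq n q (iota n q s) = s" using piq_iota[OF qpm st] .
      ultimately show "s \<in> piq n q ` carrier (AutGr n q)" by (metis imageI)
    qed
  qed
next
  note qpm = assms
  show "kernel (AutGr n q) (StabG n q) (piq n q) = generate (GL n) (\<Union>B\<in>blocks n q. GL_block n B)"
  proof
    show "kernel (AutGr n q) (StabG n q) (piq n q) \<subseteq> generate (GL n) (\<Union>B\<in>blocks n q. GL_block n B)"
    proof
      fix g :: "'k mat" assume "g \<in> kernel (AutGr n q) (StabG n q) (piq n q)"
      then have g: "g \<in> carrier (AutGr n q)" "piq n q g = id" unfolding kernel_def by (simp_all add: StabG_one)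
      have gG: "g \<in> carrier (GL n)" "good n q g" using Aut_iff_good[OF qpm] g(1) by auto
      have "bd n q g" using piq_bd[OF qpm gG g(2)] .
      then show "g \<in> generate (GL n) (\<Union>B\<in>blocks n q. GL_block n B)" using kernel_sub[OF qpm gG(1)] by simp
    qed
  next
    show "generate (GL n) (\<Union>B\<in>blocks n q. GL_block n B) \<subseteq> kernel (AutGr n q) (StabG n q) (piq n q)"
    proof
      fix g :: "'k mat" assume "g \<in> generate (GL n) (\<Union>B\<in>blocks n q. GL_block n B)"
      then have g: "g \<in> carrier (GL n)" "bd n q g" using gen_bd[OF qpm] by auto
      have "g \<in> carrier (AutGr n q)" using good_imp_Aut[OF qpm g(1) bd_good[OF qpm g(2)]] .
      moreover have "piq n q g = id" using bd_piq[OF qpm g] .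
      ultimately show "g \<in> kernel (AutGr n q) (StabG n q) (piq n q)" unfolding kernel_def by (simp add: StabG_one)
    qed
  qed
next
  note qpm = assms
  show "\<forall>\<sigma>\<in>carrier (StabG n q). piq n q (iota n q \<sigma>) = \<sigma>"
    using piq_iota[OF qpm] by (simp add: StabG_carrier)
qed

end
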